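(* Let $f<0$, $g<0$ and $\rho\in(0,\tfrac12)$. There is a unique $\omega_+>0$ such that $|\mu_-(i\omega)|>1$ for all $\omega\in(0,\omega_+)$ and $|\mu_-(i\omega)|<1$ for all $\omega>\omega_+$. Moreover $\omega_+$ is the unique positive solution of $|\mu_-(i\omega)|=1$, and $$\omega_+^2=(1-2\rho)|f|\left(\Bigl(1-\frac{|f|}{2g^2}\Bigr)(1-2\rho)+\sqrt{\Bigl(1-\frac{|f|}{2g^2}\Bigr)^2(1-2\rho)^2+\frac{2|f|}{g^2}}\right).$$
   Context: $\gamma(\nu)=\frac{f+g\nu-\nu^2}{f+g\nu}$; $\mu_\pm(\nu)=\frac{1}{2\rho}\left(\gamma(\nu)\pm\sqrt{\gamma(\nu)^2-4\rho(1-\rho)}\right)$, the two roots of $\rho\mu^2-\gamma\mu+(1-\rho)=0$. Branch convention: for $w\neq0$, $\sqrt w$ is the square root of $w$ whose argument lies in $[0,\pi)$ (branch cut along the positive real axis). In the final formula, the square root is the ordinary nonnegative square root of a positive real number. *)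

theory Defs
  imports "HOL-Analysis.Analysis"
begin

text \<open>Square root with branch cut along the positive real axis: for w \<noteq> 0,
  the square root of w whose argument lies in [0, pi).  (Arg ranges over (-pi, pi].)\<close>
definition bsqrt :: "complex \<Rightarrow> complex" where
  "bsqrt w = (if w = 0 then 0 else (THE z. z ^ 2 = w \<and> 0 \<le> Arg z \<and> Arg z < pi))"

definition gam :: "real \<Rightarrow> real \<Rightarrow> complex \<Rightarrow> complex" where
  "gam f g \<nu> = (of_real f + of_real g * \<nu> - \<nu> ^ 2) / (of_real f + of_real g * \<nu>)"

definition mu_minus :: "real \<Rightarrow> real \<Rightarrow> real \<Rightarrow> complex \<Rightarrow> complex" where
  "mu_minus \<rho> f g \<nu> =
     (gam f g \<nu> - bsqrt ((gam f g \<nu>) ^ 2 - 4 * of_real \<rho> * (1 - of_real \<rho>))) / (2 * of_real \<rho>)"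

definition mu_plus :: "real \<Rightarrow> real \<Rightarrow> real \<Rightarrow> complex \<Rightarrow> complex" where
  "mu_plus \<rho> f g \<nu> =
     (gam f g \<nu> + bsqrt ((gam f g \<nu>) ^ 2 - 4 * of_real \<rho> * (1 - of_real \<rho>))) / (2 * of_real \<rho>)"

end

theory Submission
  imports Defs
begin

lemma arg_cond: "(0 \<le> Arg z \<and> Arg z < pi) \<longleftrightarrow> (0 \<le> Im z \<and> \<not>(Re z < 0 \<and> Im z = 0))"
  using Arg_less_0[of z] Arg_le_pi[of z] Arg_eq_pi[of z] by (auto simp: less_le)

lemma bsqrt_props: "bsqrt w ^ 2 = w \<and> 0 \<le> Im (bsqrt w)"
proof (cases "w = 0")
  case True then show ?thesis by (simp add: bsqrt_def)
next
  case False
  define P where "P z \<longleftrightarrow> z ^ 2 = w \<and> 0 \<le> Arg z \<and> Arg z < pi" for z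
  have ex: "\<exists>z. P z"
  proof (cases "P (csqrt w)")
    case True then show ?thesis by blast
  next
    case False
    have "(- csqrt w) ^ 2 = w" by simp
    moreover have "csqrt w \<noteq> 0" using \<open>w \<noteq> 0\<close> by simp
    ultimately have "P (- csqrt w)" using False unfolding P_def arg_cond
      by (auto simp: complex_eq_iff)
    then show ?thesis by blast
  qed
  have un: "z = z'" if "P z" "P z'" for z z'
  proof -
    have "z ^ 2 = z' ^ 2" using that by (simp add: P_def)
    hence "(z - z') * (z + z') = 0" by (simp add: algebra_simps power2_eq_square)
    hence "z = z' \<or> z = - z'" by (auto simp: add_eq_0_iff)
    moreover have "z \<noteq> 0" using that \<open>w \<noteq> 0\<close> by (auto simp: P_def)
    ultimately show ?thesis using that unfolding P_def arg_cond
      by (auto simp: complex_eq_iff)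
  qed
  have "P (THE z. P z)" using ex un by (metis theI)
  then show ?thesis using False unfolding bsqrt_def P_def[symmetric] arg_cond
    by (simp add: P_def arg_cond)
qed


lemma poly_id:
  fixes x y u a b \<rho> :: real
  assumes "u = x^2 + y^2" "a * u = x * (\<rho>*u + 1 - \<rho>)" "b * u = y * (\<rho>*u - (1 - \<rho>))"
    "u > 0" "\<rho> \<noteq> 1/2"
  shows "(a^2 + b^2/(1-2*\<rho>)^2 - 1) * u^2 = (1-u)*((1-\<rho>)^2 - \<rho>^2*u)*(u + 4*\<rho>*(1-\<rho>)*y^2/(1-2*\<rho>)^2)"
proof -
  have k: "(1-2*\<rho>) \<noteq> 0" using assms by auto
  have "(a^2 + b^2/(1-2*\<rho>)^2 - 1) * u^2 = (a*u)^2 + (b*u)^2/(1-2*\<rho>)^2 - u^2"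
    by (simp add: field_simps power2_eq_square)
  also have "\<dots> = x^2 * (\<rho>*u + 1 - \<rho>)^2 + y^2 * (\<rho>*u - (1 - \<rho>))^2/(1-2*\<rho>)^2 - u^2"
    by (simp add: assms(2,3) power_mult_distrib)
  also have "\<dots> = (u - y^2) * (\<rho>*u + 1 - \<rho>)^2 + y^2 * (\<rho>*u - (1 - \<rho>))^2/(1-2*\<rho>)^2 - u^2"
    using assms(1) by simp
  also have "\<dots> = (1-u)*((1-\<rho>)^2 - \<rho>^2*u)*(u + 4*\<rho>*(1-\<rho>)*y^2/(1-2*\<rho>)^2)"
    using k by (simp add: field_simps) (simp add: algebra_simps power2_eq_square)
  finally show ?thesis .
qed


lemma root_facts:
  fixes \<rho> :: real and \<gamma> \<mu> :: complex
  assumes "of_real \<rho> * \<mu>^2 - \<gamma> * \<mu> + (1 - of_real \<rho>) = 0"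
  shows "Re \<gamma> * (cmod \<mu>)^2 = Re \<mu> * (\<rho>*(cmod \<mu>)^2 + 1 - \<rho>)"
    and "Im \<gamma> * (cmod \<mu>)^2 = Im \<mu> * (\<rho>*(cmod \<mu>)^2 - (1 - \<rho>))"
proof -
  let ?x = "Re \<mu>" and ?y = "Im \<mu>" and ?a = "Re \<gamma>" and ?b = "Im \<gamma>"
  have e1: "\<rho>*(?x^2 - ?y^2) - (?a*?x - ?b*?y) + 1 - \<rho> = 0"
    using arg_cong[OF assms, of Re] by (simp add: power2_eq_square)
  have e2: "2*\<rho>*?x*?y - (?a*?y + ?b*?x) = 0"
    using arg_cong[OF assms, of Im] by (simp add: power2_eq_square algebra_simps)
  have n: "(cmod \<mu>)^2 = ?x^2 + ?y^2" by (simp add: cmod_power2)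
  show "Re \<gamma> * (cmod \<mu>)^2 = Re \<mu> * (\<rho>*(cmod \<mu>)^2 + 1 - \<rho>)"
  proof -
    have "?x * (\<rho>*(?x^2 - ?y^2) - (?a*?x - ?b*?y) + 1 - \<rho>) + ?y * (2*\<rho>*?x*?y - (?a*?y + ?b*?x)) = 0"
      using e1 e2 by simp
    then show ?thesis unfolding n by (simp add: algebra_simps power2_eq_square power3_eq_cube)
  qed
  show "Im \<gamma> * (cmod \<mu>)^2 = Im \<mu> * (\<rho>*(cmod \<mu>)^2 - (1 - \<rho>))"
  proof -
    have "?x * (2*\<rho>*?x*?y - (?a*?y + ?b*?x)) - ?y * (\<rho>*(?x^2 - ?y^2) - (?a*?x - ?b*?y) + 1 - \<rho>) = 0"
      using e1 e2 by simp
    then show ?thesis unfolding n by (simp add: algebra_simps power2_eq_square power3_eq_cube)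
  qed
qed

lemma key:
  fixes \<rho> :: real and \<gamma> s :: complex
  assumes r0: "0 < \<rho>" and r1: "\<rho> < 1/2" and b0: "Im \<gamma> > 0"
    and s2: "s^2 = \<gamma>^2 - 4 * of_real \<rho> * (1 - of_real \<rho>)" and si: "Im s \<ge> 0"
  shows "\<exists>C>0. (Re \<gamma>)^2 + (Im \<gamma>)^2/(1-2*\<rho>)^2 - 1
              = (1 - (cmod ((\<gamma> - s)/(2 * of_real \<rho>)))^2) * C"
proof -
  define \<mu> where "\<mu> = (\<gamma> - s)/(2 * of_real \<rho>)"
  define \<nu> where "\<nu> = (\<gamma> + s)/(2 * of_real \<rho>)"
  have rc: "(of_real \<rho> :: complex) \<noteq> 0" using r0 by simp
  have sm: "s = \<gamma> - 2 * of_real \<rho> * \<mu>" using rc by (simp add: \<mu>_def field_simps)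
  have sn: "s = 2 * of_real \<rho> * \<nu> - \<gamma>" using rc by (simp add: \<nu>_def field_simps)
  have "4 * of_real \<rho> * (of_real \<rho> * \<mu>^2 - \<gamma> * \<mu> + (1 - of_real \<rho>)) = 0"
    using s2 unfolding sm by (simp add: algebra_simps power2_eq_square)
  hence eqm: "of_real \<rho> * \<mu>^2 - \<gamma> * \<mu> + (1 - of_real \<rho>) = 0" using rc by simp
  have "4 * of_real \<rho> * (of_real \<rho> * \<nu>^2 - \<gamma> * \<nu> + (1 - of_real \<rho>)) = 0"
    using s2 unfolding sn by (simp add: algebra_simps power2_eq_square)
  hence eqn: "of_real \<rho> * \<nu>^2 - \<gamma> * \<nu> + (1 - of_real \<rho>) = 0" using rc by simp
  have prod: "\<mu> * \<nu> = of_real ((1-\<rho>)/\<rho>)"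
  proof -
    have "\<mu> * \<nu> = (\<gamma>^2 - s^2) / (4 * (of_real \<rho>)^2)"
      by (simp add: \<mu>_def \<nu>_def field_simps power2_eq_square)
    also have "\<dots> = of_real ((1-\<rho>)/\<rho>)" unfolding s2 using rc
      by (simp add: field_simps power2_eq_square)
    finally show ?thesis .
  qed
  have imsum: "Im \<mu> + Im \<nu> = Im \<gamma> / \<rho>"
    using r0 by (simp add: \<mu>_def \<nu>_def field_simps)
  have imdiff: "Im \<nu> - Im \<mu> = Im s / \<rho>"
    using r0 by (simp add: \<mu>_def \<nu>_def field_simps)
  define u where "u = (cmod \<mu>)^2"
  define vv where "vv = (cmod \<nu>)^2"
  have uv: "u * vv = ((1-\<rho>)/\<rho>)^2"
  proof -
    have "u * vv = (cmod (\<mu> * \<nu>))^2" by (simp add: u_def vv_def norm_mult power_mult_distrib)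
    also have "\<dots> = ((1-\<rho>)/\<rho>)^2" unfolding prod norm_of_real using r0 r1 by simp
    finally show ?thesis .
  qed
  have fm1: "Re \<gamma> * u = Re \<mu> * (\<rho>*u + 1 - \<rho>)" and fm2: "Im \<gamma> * u = Im \<mu> * (\<rho>*u - (1 - \<rho>))"
    using root_facts[OF eqm] by (simp_all add: u_def)
  have fn2: "Im \<gamma> * vv = Im \<nu> * (\<rho> * vv - (1 - \<rho>))"
    using root_facts[OF eqn] by (simp_all add: vv_def)
  have u0: "u > 0" "vv > 0" using uv r0 r1 unfolding u_def vv_def by (auto simp: zero_less_mult_iff)
  have q: "Im \<nu> > 0"
  proof -
    have "Im s / \<rho> \<ge> 0" using si r0 by simp
    moreover have "Im \<gamma> / \<rho> > 0" using b0 r0 by simp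
    ultimately show ?thesis using imsum imdiff by linarith
  qed
  have vbig: "\<rho> * vv > 1 - \<rho>"
  proof -
    have "Im \<gamma> * vv > 0" using b0 u0 by simp
    hence "Im \<nu> * (\<rho> * vv - (1 - \<rho>)) > 0" using fn2 by simp
    then show ?thesis using q by (simp add: zero_less_mult_iff)
  qed
  have usmall: "\<rho> * u < 1 - \<rho>"
  proof (rule ccontr)
    assume "\<not> ?thesis"
    hence h1: "u \<ge> (1-\<rho>)/\<rho>" using r0 by (simp add: field_simps)
    have h2: "vv > (1-\<rho>)/\<rho>" using vbig r0 by (simp add: field_simps)
    have h3: "(1-\<rho>)/\<rho> > 0" using r0 r1 by simp
    have "u * vv \<ge> ((1-\<rho>)/\<rho>) * vv" using h1 u0 by (intro mult_right_mono) auto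
    moreover have "((1-\<rho>)/\<rho>) * vv > ((1-\<rho>)/\<rho>) * ((1-\<rho>)/\<rho>)"
      using h2 h3 by (intro mult_strict_left_mono) auto
    ultimately have "u * vv > ((1-\<rho>)/\<rho>)^2" by (simp add: power2_eq_square)
    then show False using uv by simp
  qed
  have pos1: "(1-\<rho>)^2 - \<rho>^2*u > 0"
  proof -
    have "\<rho>^2 * u < \<rho> * (1-\<rho>)" using usmall r0 by (simp add: power2_eq_square)
    also have "\<dots> < (1-\<rho>)^2" using r0 r1 by (simp add: power2_eq_square)
    finally show ?thesis by simp
  qed
  have pos2: "u + 4*\<rho>*(1-\<rho>)*(Im \<mu>)^2/(1-2*\<rho>)^2 > 0"
    using u0 r0 r1 by (intro add_pos_nonneg) auto
  have id: "((Re \<gamma>)^2 + (Im \<gamma>)^2/(1-2*\<rho>)^2 - 1) * u^2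
      = (1-u)*((1-\<rho>)^2 - \<rho>^2*u)*(u + 4*\<rho>*(1-\<rho>)*(Im \<mu>)^2/(1-2*\<rho>)^2)"
    by (rule poly_id[OF _ fm1 fm2 u0(1)]) (use r1 in \<open>auto simp: u_def cmod_power2\<close>)
  define C where "C = ((1-\<rho>)^2 - \<rho>^2*u)*(u + 4*\<rho>*(1-\<rho>)*(Im \<mu>)^2/(1-2*\<rho>)^2) / u^2"
  have "C > 0" unfolding C_def using pos1 pos2 u0 by simp
  moreover have "(Re \<gamma>)^2 + (Im \<gamma>)^2/(1-2*\<rho>)^2 - 1 = (1 - u) * C"
    using id u0 unfolding C_def by (simp add: field_simps)
  ultimately show ?thesis unfolding u_def \<mu>_def by blast
qed


lemma gam_parts:
  fixes f g \<omega> :: real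
  assumes "f < 0"
  defines "D \<equiv> f^2 + g^2 * \<omega>^2"
  shows "Re (gam f g (\<i> * of_real \<omega>)) = 1 + f * \<omega>^2 / D"
    and "Im (gam f g (\<i> * of_real \<omega>)) = - g * \<omega>^3 / D"
proof -
  have D0: "D > 0" using assms unfolding D_def by (intro add_pos_nonneg) auto
  have den: "(of_real f + of_real g * (\<i> * of_real \<omega>) :: complex) \<noteq> 0"
    using assms by (auto simp: complex_eq_iff)
  have "gam f g (\<i> * of_real \<omega>) = 1 + of_real (\<omega>^2) / (of_real f + of_real g * (\<i> * of_real \<omega>))"
    unfolding gam_def using den by (simp add: field_simps power2_eq_square)
  also have "\<dots> = Complex (1 + f * \<omega>^2 / D) (- g * \<omega>^3 / D)"
    using D0 by (simp add: complex_eq_iff Re_divide Im_divide D_def power2_eq_square power3_eq_cube field_simps)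
  finally show "Re (gam f g (\<i> * of_real \<omega>)) = 1 + f * \<omega>^2 / D"
    and "Im (gam f g (\<i> * of_real \<omega>)) = - g * \<omega>^3 / D" by simp_all
qed


definition PP :: "real \<Rightarrow> real \<Rightarrow> real \<Rightarrow> real \<Rightarrow> real" where
  "PP \<rho> f g t = g^2 * t^2 + (1-2*\<rho>)^2 * (2*f*g^2 + f^2) * t + 2*(1-2*\<rho>)^2 * f^3"

lemma Q_id:
  fixes f g \<omega> \<rho> :: real
  assumes "f < 0" "\<rho> < 1/2"
  defines "D \<equiv> f^2 + g^2 * \<omega>^2"
  shows "(1 + f * \<omega>^2 / D)^2 + (- g * \<omega>^3 / D)^2/(1-2*\<rho>)^2 - 1
         = \<omega>^2 * PP \<rho> f g (\<omega>^2) / ((1-2*\<rho>)^2 * D^2)"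
proof -
  have D0: "D > 0" using assms unfolding D_def by (intro add_pos_nonneg) auto
  have k: "1 - 2*\<rho> \<noteq> 0" using assms by simp
  show ?thesis using D0 k unfolding PP_def
    by (simp add: field_simps) (simp add: D_def algebra_simps eval_nat_numeral)
qed

lemma mod_sign:
  fixes f g \<rho> \<omega> :: real
  assumes f: "f < 0" and g: "g < 0" and r0: "0 < \<rho>" and r1: "\<rho> < 1/2" and w: "\<omega> > 0"
  shows "\<exists>C>0. PP \<rho> f g (\<omega>^2) = (1 - (cmod (mu_minus \<rho> f g (\<i> * of_real \<omega>)))^2) * C"
proof -
  define \<gamma> where "\<gamma> = gam f g (\<i> * of_real \<omega>)"
  define D where "D = f^2 + g^2 * \<omega>^2"
  have D0: "D > 0" using f unfolding D_def by (intro add_pos_nonneg) auto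
  have re: "Re \<gamma> = 1 + f * \<omega>^2 / D" and im: "Im \<gamma> = - g * \<omega>^3 / D"
    using gam_parts[OF f, of g \<omega>] by (simp_all add: \<gamma>_def D_def)
  have imp: "Im \<gamma> > 0" unfolding im using g w D0 by (simp add: divide_neg_pos mult_neg_pos)
  obtain C where C: "C > 0" "(Re \<gamma>)^2 + (Im \<gamma>)^2/(1-2*\<rho>)^2 - 1
              = (1 - (cmod ((\<gamma> - bsqrt (\<gamma>^2 - 4 * of_real \<rho> * (1 - of_real \<rho>)))/(2 * of_real \<rho>)))^2) * C"
    using key[OF r0 r1 imp, of "bsqrt (\<gamma>^2 - 4 * of_real \<rho> * (1 - of_real \<rho>))"] bsqrt_props by blast
  have m: "mu_minus \<rho> f g (\<i> * of_real \<omega>) = (\<gamma> - bsqrt (\<gamma>^2 - 4 * of_real \<rho> * (1 - of_real \<rho>)))/(2 * of_real \<rho>)"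
    by (simp add: mu_minus_def \<gamma>_def)
  define K where "K = (1-2*\<rho>)^2 * D^2 / \<omega>^2"
  have K0: "K > 0" unfolding K_def using D0 w r1 by simp
  have "PP \<rho> f g (\<omega>^2) = ((Re \<gamma>)^2 + (Im \<gamma>)^2/(1-2*\<rho>)^2 - 1) * K"
    unfolding re im Q_id[OF f r1, of \<omega> g, folded D_def] K_def using D0 w r1 by (simp add: field_simps)
  also have "\<dots> = (1 - (cmod (mu_minus \<rho> f g (\<i> * of_real \<omega>)))^2) * (C * K)"
    unfolding m C(2) by simp
  finally show ?thesis using C(1) K0 by (intro exI[of _ "C*K"]) simp
qed


lemma PP_factor:
  fixes f g \<rho> t :: real
  assumes f: "f < 0" and g: "g < 0" and r0: "0 < \<rho>" and r1: "\<rho> < 1/2"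
  defines "T \<equiv> (1 - 2 * \<rho>) * \<bar>f\<bar> *
                 ((1 - \<bar>f\<bar> / (2 * g ^ 2)) * (1 - 2 * \<rho>)
                  + sqrt ((1 - \<bar>f\<bar> / (2 * g ^ 2)) ^ 2 * (1 - 2 * \<rho>) ^ 2 + 2 * \<bar>f\<bar> / g ^ 2))"
  shows "T > 0" and "t > 0 \<Longrightarrow> (PP \<rho> f g t < 0 \<longleftrightarrow> t < T) \<and> (PP \<rho> f g t = 0 \<longleftrightarrow> t = T)"
proof -
  define F where "F = - f"
  define k where "k = 1 - 2*\<rho>"
  define \<alpha> where "\<alpha> = 1 - F / (2 * g^2)"
  define Z where "Z = \<alpha>^2 * k^2 + 2 * F / g^2"
  define S where "S = sqrt Z"
  define T' where "T' = k * F * (\<alpha> * k - S)"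
  have F0: "F > 0" and k0: "k > 0" and g2: "g^2 > 0" using f g r1 by (auto simp: F_def k_def)
  have Tdef: "T = k * F * (\<alpha> * k + S)"
    unfolding T_def S_def Z_def \<alpha>_def k_def F_def using f by simp
  have Zg: "Z > (\<alpha> * k)^2" unfolding Z_def using F0 g2 by (simp add: power_mult_distrib)
  hence Z0: "Z \<ge> 0" by (smt (verit) zero_le_power2)
  have SS: "S^2 = Z" unfolding S_def using Z0 by simp
  have Sg: "S > \<bar>\<alpha> * k\<bar>"
  proof -
    have "sqrt ((\<alpha> * k)^2) < sqrt Z" using Zg by (simp only: real_sqrt_less_iff)
    thus ?thesis unfolding S_def by simp
  qed
  show Tpos: "T > 0" unfolding Tdef using F0 k0 Sg by (intro mult_pos_pos) auto
  have T'neg: "T' < 0" unfolding T'_def using F0 k0 Sg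
    by (intro mult_pos_neg) auto
  have fac: "PP \<rho> f g t = g^2 * (t - T) * (t - T')"
  proof -
    have ff: "f = - F" by (simp add: F_def)
    have "g^2 * (t - T) * (t - T') = g^2 * t^2 - g^2 * (T + T') * t + g^2 * (T * T')"
      by (simp add: algebra_simps power2_eq_square)
    also have "T + T' = 2 * k^2 * F * \<alpha>" unfolding Tdef T'_def by (simp add: algebra_simps power2_eq_square)
    also have "T * T' = k^2 * F^2 * ((\<alpha> * k)^2 - S^2)" unfolding Tdef T'_def by (simp add: algebra_simps power2_eq_square)
    also have "(\<alpha> * k)^2 - S^2 = - 2 * F / g^2" unfolding SS Z_def by (simp add: power_mult_distrib)
    finally have "g^2 * (t - T) * (t - T') = g^2 * t^2 - g^2 * (2 * k^2 * F * \<alpha>) * t + g^2 * (k^2 * F^2 * (- 2 * F / g^2))" .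
    also have "\<dots> = PP \<rho> f g t" unfolding PP_def ff \<alpha>_def k_def using g2
      by (simp add: field_simps) (simp add: algebra_simps power2_eq_square power3_eq_cube)
    finally show ?thesis by simp
  qed
  assume t: "t > 0"
  have tt: "t - T' > 0" using t T'neg by simp
  have "PP \<rho> f g t < 0 \<longleftrightarrow> t - T < 0" unfolding fac using g2 tt
    by (simp add: mult_less_0_iff zero_less_mult_iff)
  moreover have "PP \<rho> f g t = 0 \<longleftrightarrow> t = T" unfolding fac using g2 tt by simp
  ultimately show "(PP \<rho> f g t < 0 \<longleftrightarrow> t < T) \<and> (PP \<rho> f g t = 0 \<longleftrightarrow> t = T)" by simp
qed

lemma mod_iff:
  fixes f g \<rho> \<omega> :: real
  assumes f: "f < 0" and g: "g < 0" and r0: "0 < \<rho>" and r1: "\<rho> < 1/2" and w: "\<omega> > 0"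
  defines "T \<equiv> (1 - 2 * \<rho>) * \<bar>f\<bar> *
                 ((1 - \<bar>f\<bar> / (2 * g ^ 2)) * (1 - 2 * \<rho>)
                  + sqrt ((1 - \<bar>f\<bar> / (2 * g ^ 2)) ^ 2 * (1 - 2 * \<rho>) ^ 2 + 2 * \<bar>f\<bar> / g ^ 2))"
  shows "(cmod (mu_minus \<rho> f g (\<i> * of_real \<omega>)) > 1 \<longleftrightarrow> \<omega> < sqrt T)
       \<and> (cmod (mu_minus \<rho> f g (\<i> * of_real \<omega>)) = 1 \<longleftrightarrow> \<omega> = sqrt T)
       \<and> (cmod (mu_minus \<rho> f g (\<i> * of_real \<omega>)) < 1 \<longleftrightarrow> \<omega> > sqrt T)"
proof -
  define m where "m = cmod (mu_minus \<rho> f g (\<i> * of_real \<omega>))"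
  obtain C where C: "C > 0" "PP \<rho> f g (\<omega>^2) = (1 - m^2) * C"
    using mod_sign[OF f g r0 r1 w] unfolding m_def by blast
  have T0: "T > 0" using PP_factor(1)[OF f g r0 r1] unfolding T_def .
  have w2: "\<omega>^2 > 0" using w by simp
  have P: "(PP \<rho> f g (\<omega>^2) < 0 \<longleftrightarrow> \<omega>^2 < T) \<and> (PP \<rho> f g (\<omega>^2) = 0 \<longleftrightarrow> \<omega>^2 = T)"
    using PP_factor(2)[OF f g r0 r1 w2] unfolding T_def .
  have m0: "m \<ge> 0" unfolding m_def by simp
  have s1: "\<omega> < sqrt T \<longleftrightarrow> \<omega>^2 < T"
  proof -
    have "\<omega> = sqrt (\<omega>^2)" using w by simp
    then show ?thesis by (metis real_sqrt_less_iff)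
  qed
  have s2: "\<omega> = sqrt T \<longleftrightarrow> \<omega>^2 = T"
    using w T0 by (metis less_eq_real_def real_sqrt_abs real_sqrt_pow2 abs_of_pos)
  have A: "m > 1 \<longleftrightarrow> \<omega> < sqrt T"
  proof -
    have "m > 1 \<longleftrightarrow> 1 - m^2 < 0" using m0
      by (metis abs_of_nonneg diff_less_0_iff_less one_less_power one_power2 power2_less_imp_less zero_less_numeral abs_square_less_1 less_eq_real_def)
    also have "\<dots> \<longleftrightarrow> PP \<rho> f g (\<omega>^2) < 0" using C by (simp add: mult_less_0_iff)
    finally show ?thesis using P s1 by simp
  qed
  have B: "m = 1 \<longleftrightarrow> \<omega> = sqrt T"
  proof -
    have "m = 1 \<longleftrightarrow> 1 - m^2 = 0" using m0
      by (metis diff_self eq_iff_diff_eq_0 power_one real_sqrt_abs real_sqrt_one abs_of_nonneg)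
    also have "\<dots> \<longleftrightarrow> PP \<rho> f g (\<omega>^2) = 0" using C by simp
    finally show ?thesis using P s2 by simp
  qed
  show ?thesis unfolding m_def[symmetric] using A B by auto
qed

theorem mainTheorem11:
  fixes f g \<rho> :: real
  assumes "f < 0" and "g < 0" and "0 < \<rho>" and "\<rho> < 1/2"
  shows "(\<exists>!wp::real. 0 < wp \<and>
            (\<forall>\<omega>. 0 < \<omega> \<and> \<omega> < wp \<longrightarrow> cmod (mu_minus \<rho> f g (\<i> * of_real \<omega>)) > 1) \<and>
            (\<forall>\<omega>. \<omega> > wp \<longrightarrow> cmod (mu_minus \<rho> f g (\<i> * of_real \<omega>)) < 1))
       \<and> (\<forall>wp::real. (0 < wp \<and>
            (\<forall>\<omega>. 0 < \<omega> \<and> \<omega> < wp \<longrightarrow> cmod (mu_minus \<rho> f g (\<i> * of_real \<omega>)) > 1) \<and>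
            (\<forall>\<omega>. \<omega> > wp \<longrightarrow> cmod (mu_minus \<rho> f g (\<i> * of_real \<omega>)) < 1))
          \<longrightarrow> (\<forall>\<omega>. 0 < \<omega> \<longrightarrow> (cmod (mu_minus \<rho> f g (\<i> * of_real \<omega>)) = 1 \<longleftrightarrow> \<omega> = wp))
            \<and> wp ^ 2 = (1 - 2 * \<rho>) * \<bar>f\<bar> *
                 ((1 - \<bar>f\<bar> / (2 * g ^ 2)) * (1 - 2 * \<rho>)
                  + sqrt ((1 - \<bar>f\<bar> / (2 * g ^ 2)) ^ 2 * (1 - 2 * \<rho>) ^ 2 + 2 * \<bar>f\<bar> / g ^ 2)))"
proof -
  define T where "T = (1 - 2 * \<rho>) * \<bar>f\<bar> *
                 ((1 - \<bar>f\<bar> / (2 * g ^ 2)) * (1 - 2 * \<rho>)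
                  + sqrt ((1 - \<bar>f\<bar> / (2 * g ^ 2)) ^ 2 * (1 - 2 * \<rho>) ^ 2 + 2 * \<bar>f\<bar> / g ^ 2))"
  define w0 where "w0 = sqrt T"
  let ?m = "\<lambda>\<omega>. cmod (mu_minus \<rho> f g (\<i> * of_real \<omega>))"
  have T0: "T > 0" using PP_factor(1)[OF assms] unfolding T_def .
  have w00: "w0 > 0" using T0 by (simp add: w0_def)
  have MI: "\<And>\<omega>. \<omega> > 0 \<Longrightarrow> (?m \<omega> > 1 \<longleftrightarrow> \<omega> < w0) \<and> (?m \<omega> = 1 \<longleftrightarrow> \<omega> = w0) \<and> (?m \<omega> < 1 \<longleftrightarrow> \<omega> > w0)"
    using mod_iff[OF assms] unfolding w0_def T_def by blast
  define Pr where "Pr wp \<longleftrightarrow> 0 < wp \<and> (\<forall>\<omega>. 0 < \<omega> \<and> \<omega> < wp \<longrightarrow> ?m \<omega> > 1) \<and> (\<forall>\<omega>. \<omega> > wp \<longrightarrow> ?m \<omega> < 1)" for wp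
  have Pw0: "Pr w0" unfolding Pr_def using w00 MI by (auto dest: order.strict_trans[OF w00])
  have uniq: "wp = w0" if "Pr wp" for wp
  proof (rule ccontr)
    assume ne: "wp \<noteq> w0"
    define \<omega> where "\<omega> = (wp + w0) / 2"
    have wp0: "wp > 0" using that by (simp add: Pr_def)
    show False
    proof (cases "wp < w0")
      case True
      hence "\<omega> > wp" "\<omega> < w0" "\<omega> > 0" using wp0 by (auto simp: \<omega>_def)
      then show False using that MI[of \<omega>] unfolding Pr_def by auto
    next
      case False
      hence "\<omega> < wp" "\<omega> > w0" "\<omega> > 0" using ne w00 by (auto simp: \<omega>_def)
      then show False using that MI[of \<omega>] unfolding Pr_def by auto
    qed
  qed
  have ex1: "\<exists>!wp. Pr wp" using Pw0 uniq by blast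
  have part2: "\<forall>wp. Pr wp \<longrightarrow> (\<forall>\<omega>. 0 < \<omega> \<longrightarrow> (?m \<omega> = 1 \<longleftrightarrow> \<omega> = wp)) \<and> wp^2 = T"
  proof (intro allI impI)
    fix wp assume "Pr wp"
    hence e: "wp = w0" by (rule uniq)
    show "(\<forall>\<omega>. 0 < \<omega> \<longrightarrow> (?m \<omega> = 1 \<longleftrightarrow> \<omega> = wp)) \<and> wp^2 = T"
      using MI T0 unfolding e w0_def by simp
  qed
  show ?thesis using ex1 part2 unfolding Pr_def T_def by blast
qed

end
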